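(* Let $(X,d)$ be a complete metric space and let $G:X\times X\to X$ be a mapping such that (a) $G(x,x)=x$ for all $x\in X$, and (b) for $x,y\in X$, $G(x,y)=x$ implies $y=x$. Let $T:X\to P_{cl}(X)$ be a multivalued operator with $SFix(T)\neq\emptyset$ and let $T_G(x)=\{G(x,u):u\in T(x)\}$ be the admissible perturbation of $T$ corresponding to $G$. Suppose there exist $\alpha,\beta,\gamma\ge0$ with $\alpha+\beta+\gamma<1$ such that $$H(T_G(x),T_G(y))\le\alpha d(x,y)+\beta D(x,T_G(y))+\gamma D(y,T_G(x))\quad\text{for all }x,y\in X,$$ so that $SFix(T)=\{x^*\}$ for some $x^*$, and suppose there exists $l\in(0,1)$ such that $H(T(x),\{x^*\})\le l\,H(T_G(x),\{x^*\})$ for all $x\in X$. Then $T$ is a quasi-contraction: there exists $q\in(0,1)$ such that $H(T(x),\{x^*\})\le q\,d(x,x^* )$ for all $x^*\in SFix(T)$ and all $x\in X$.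
   Context: $P_{cl}(X)$ is the family of nonempty closed subsets of $X$; $SFix(T)=\{x:T(x)=\{x\}\}$. For nonempty $A,B\subseteq X$: $D(a,B)=\inf_{b\in B}d(a,b)$, $e(A,B)=\sup_{a\in A}D(a,B)$, $H(A,B)=\max\{e(A,B),e(B,A)\}$. *)

theory Defs
  imports "HOL-Analysis.Analysis" "HOL-Library.Extended_Real"
begin

text \<open>D(a,B) = inf of distances (the library's infdist; B nonempty in all uses).\<close>
definition Dpt :: "'a::metric_space \<Rightarrow> 'a set \<Rightarrow> real" where
  "Dpt a B = infdist a B"

definition excess :: "'a::metric_space set \<Rightarrow> 'a set \<Rightarrow> ereal" where
  "excess A B = (SUP a\<in>A. ereal (Dpt a B))"

definition Hpd :: "'a::metric_space set \<Rightarrow> 'a set \<Rightarrow> ereal" where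
  "Hpd A B = max (excess A B) (excess B A)"

definition SFix :: "('a \<Rightarrow> 'a set) \<Rightarrow> 'a set" where
  "SFix T = {x. T x = {x}}"

definition TG :: "('a \<Rightarrow> 'a \<Rightarrow> 'a) \<Rightarrow> ('a \<Rightarrow> 'a set) \<Rightarrow> 'a \<Rightarrow> 'a set" where
  "TG G T x = (\<lambda>u. G x u) ` T x"

end

theory Submission
  imports Defs
begin

theorem mainTheorem8:
  fixes G :: "'a::complete_space \<Rightarrow> 'a \<Rightarrow> 'a"
    and T :: "'a \<Rightarrow> 'a set"
    and \<alpha> \<beta> \<gamma> l :: real
  assumes G_diag: "\<And>x. G x x = x"
    and G_inj: "\<And>x y. G x y = x \<Longrightarrow> y = x"
    and T_cl: "\<And>x. T x \<noteq> {} \<and> closed (T x)"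
    and SFix_ne: "SFix T \<noteq> {}"
    and coef: "\<alpha> \<ge> 0" "\<beta> \<ge> 0" "\<gamma> \<ge> 0" "\<alpha> + \<beta> + \<gamma> < 1"
    and contr: "\<And>x y. Hpd (TG G T x) (TG G T y)
        \<le> ereal (\<alpha> * dist x y + \<beta> * Dpt x (TG G T y) + \<gamma> * Dpt y (TG G T x))"
    and l: "0 < l" "l < 1"
    and lcond: "\<And>xs x. xs \<in> SFix T \<Longrightarrow> Hpd (T x) {xs} \<le> ereal l * Hpd (TG G T x) {xs}"
  shows "\<exists>q. 0 < q \<and> q < 1 \<and>
    (\<forall>xs\<in>SFix T. \<forall>x. Hpd (T x) {xs} \<le> ereal (q * dist x xs))"
proof (intro exI conjI ballI allI)
  show "0 < l" "l < 1" using l by auto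
next
  fix xs x assume xs: "xs \<in> SFix T"
  have Txs: "TG G T xs = {xs}" using xs G_diag by (simp add: SFix_def TG_def)
  define H where "H = Hpd (TG G T x) {xs}"
  define Dx where "Dx = Dpt xs (TG G T x)"
  have Dx0: "Dx \<ge> 0" unfolding Dx_def Dpt_def by (simp add: infdist_nonneg)
  have "excess {xs} (TG G T x) = ereal Dx" unfolding excess_def Dx_def by simp
  hence HD: "ereal Dx \<le> H" unfolding H_def Hpd_def by simp
  have Hle: "H \<le> ereal (\<alpha> * dist x xs + \<beta> * dist x xs + \<gamma> * Dx)"
    using contr[of x xs] unfolding H_def Dx_def Txs Dpt_def by (simp add: infdist_singleton)
  obtain h where h: "H = ereal h" using HD Hle by (cases H) auto
  have hD: "Dx \<le> h" using HD h by simp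
  have h1: "h \<le> \<alpha> * dist x xs + \<beta> * dist x xs + \<gamma> * Dx" using Hle h by simp
  have "\<gamma> * Dx \<le> \<gamma> * h" using hD coef by (simp add: mult_left_mono)
  hence "(1 - \<gamma>) * h \<le> (\<alpha> + \<beta>) * dist x xs" using h1 by (simp add: algebra_simps)
  also have "\<dots> \<le> (1 - \<gamma>) * dist x xs" using coef by (intro mult_right_mono) auto
  finally have "h \<le> dist x xs" using coef by simp
  hence "l * h \<le> l * dist x xs" using l by (simp add: mult_left_mono)
  moreover have "Hpd (T x) {xs} \<le> ereal (l * h)" using lcond[OF xs, of x] h H_def by simp
  ultimately show "Hpd (T x) {xs} \<le> ereal (l * dist x xs)" by (meson ereal_less_eq(3) order_trans)
qed

end
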